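(* Let $N,G,H$ be finitely generated groups. If $G$ and $H$ are biLipschitz equivalent, then $N\wr G$ and $N\wr H$ are biLipschitz equivalent.
   Context: Groups carry word metrics from finite generating sets. $N\wr G=\bigl(\bigoplus_G N\bigr)\rtimes G$ with $G$ acting by left translation of coordinates, with the word metric for the standard generating set (lamp generators at the identity and generators of $G$). A biLipschitz equivalence is a bijection $f$ with $\frac1C d(x,y)\le d(f(x),f(y))\le Cd(x,y)$ for some $C\ge1$. *)

theory Defs
  imports "HOL-Algebra.Generated_Groups" "HOL-Library.FuncSet" Complex_Main
begin

definition fin_gen_set :: "('a, 'b) monoid_scheme \<Rightarrow> 'a set \<Rightarrow> bool" where
  "fin_gen_set G S \<longleftrightarrow> finite S \<and> S \<subseteq> carrier G \<and> generate G S = carrier G"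

definition word_length :: "('a, 'b) monoid_scheme \<Rightarrow> 'a set \<Rightarrow> 'a \<Rightarrow> nat" where
  "word_length G S x =
     (LEAST n. \<exists>ws. length ws = n \<and> set ws \<subseteq> S \<union> (\<lambda>s. inv\<^bsub>G\<^esub> s) ` S
                 \<and> x = foldr (\<lambda>a b. a \<otimes>\<^bsub>G\<^esub> b) ws \<one>\<^bsub>G\<^esub>)"

definition word_dist :: "('a, 'b) monoid_scheme \<Rightarrow> 'a set \<Rightarrow> 'a \<Rightarrow> 'a \<Rightarrow> nat" where
  "word_dist G S x y = word_length G S (inv\<^bsub>G\<^esub> x \<otimes>\<^bsub>G\<^esub> y)"

definition bilipschitz_equiv ::
  "('a, 'b) monoid_scheme \<Rightarrow> 'a set \<Rightarrow> ('c, 'd) monoid_scheme \<Rightarrow> 'c set \<Rightarrow> bool" where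
  "bilipschitz_equiv G S H T \<longleftrightarrow>
     (\<exists>f (C::real). C \<ge> 1 \<and> bij_betw f (carrier G) (carrier H) \<and>
        (\<forall>x\<in>carrier G. \<forall>y\<in>carrier G.
            real (word_dist G S x y) / C \<le> real (word_dist H T (f x) (f y)) \<and>
            real (word_dist H T (f x) (f y)) \<le> C * real (word_dist G S x y)))"

text \<open>Wreath product N wr G = (finitely supported functions carrier G -> carrier N) semidirect G,
  G acting by left translation: (g.f)(x) = f(g^{-1} x).
  Functions are extended by the identity of N outside carrier G.\<close>
definition wreath :: "('n, 'c) monoid_scheme \<Rightarrow> ('g, 'd) monoid_scheme \<Rightarrow> (('g \<Rightarrow> 'n) \<times> 'g) monoid" where
  "wreath N G =
    \<lparr> carrier = {(f, g). g \<in> carrier G \<and> (\<forall>x. f x \<in> carrier N)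
                     \<and> (\<forall>x. x \<notin> carrier G \<longrightarrow> f x = \<one>\<^bsub>N\<^esub>)
                     \<and> finite {x. f x \<noteq> \<one>\<^bsub>N\<^esub>}},
      mult = (\<lambda>(f, g) (f', g').
                (\<lambda>x. if x \<in> carrier G then f x \<otimes>\<^bsub>N\<^esub> f' (inv\<^bsub>G\<^esub> g \<otimes>\<^bsub>G\<^esub> x) else \<one>\<^bsub>N\<^esub>,
                 g \<otimes>\<^bsub>G\<^esub> g')),
      one = (\<lambda>_. \<one>\<^bsub>N\<^esub>, \<one>\<^bsub>G\<^esub>) \<rparr>"

definition wreath_gens ::
  "('n, 'c) monoid_scheme \<Rightarrow> 'n set \<Rightarrow> ('g, 'd) monoid_scheme \<Rightarrow> 'g set \<Rightarrow> (('g \<Rightarrow> 'n) \<times> 'g) set" where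
  "wreath_gens N S G T =
     (\<lambda>s. (\<lambda>x. if x = \<one>\<^bsub>G\<^esub> then s else \<one>\<^bsub>N\<^esub>, \<one>\<^bsub>G\<^esub>)) ` S
     \<union> (\<lambda>t. (\<lambda>_. \<one>\<^bsub>N\<^esub>, t)) ` T"

end

theory Submission
  imports Defs
begin


context group
begin

abbreviation "alph S \<equiv> S \<union> (\<lambda>s. inv s) ` S"

lemma alph_carrier: "S \<subseteq> carrier G \<Longrightarrow> alph S \<subseteq> carrier G"
  by auto

lemma foldr_closed: "set ws \<subseteq> carrier G \<Longrightarrow> foldr (\<lambda>a b. a \<otimes> b) ws \<one> \<in> carrier G"
  by (induction ws) auto

lemma foldr_app: "set ws \<subseteq> carrier G \<Longrightarrow> set vs \<subseteq> carrier G \<Longrightarrow>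
   foldr (\<lambda>a b. a \<otimes> b) (ws @ vs) \<one> = foldr (\<lambda>a b. a \<otimes> b) ws \<one> \<otimes> foldr (\<lambda>a b. a \<otimes> b) vs \<one>"
  by (induction ws) (auto simp: m_assoc foldr_closed)

lemma foldr_gen: "set ws \<subseteq> carrier G \<Longrightarrow> z \<in> carrier G \<Longrightarrow>
   foldr (\<lambda>a b. a \<otimes> b) ws z = foldr (\<lambda>a b. a \<otimes> b) ws \<one> \<otimes> z"
  by (induction ws) (auto simp: m_assoc foldr_closed)

lemma words_exist:
  assumes "S \<subseteq> carrier G" "x \<in> generate G S"
  shows "\<exists>ws. set ws \<subseteq> alph S \<and> x = foldr (\<lambda>a b. a \<otimes> b) ws \<one>"
  using assms(2)
proof (induction rule: generate.induct)
  case one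
  then show ?case by (intro exI[of _ "[]"]) auto
next
  case (incl h)
  then show ?case using assms(1) by (intro exI[of _ "[h]"]) auto
next
  case (inv h)
  then show ?case using assms(1) by (intro exI[of _ "[inv h]"]) auto
next
  case (eng h1 h2)
  then obtain ws vs where "set ws \<subseteq> alph S" "h1 = foldr (\<lambda>a b. a \<otimes> b) ws \<one>"
    "set vs \<subseteq> alph S" "h2 = foldr (\<lambda>a b. a \<otimes> b) vs \<one>" by blast
  moreover have "set ws \<subseteq> carrier G" "set vs \<subseteq> carrier G"
    using calculation alph_carrier[OF assms(1)] by auto
  ultimately show ?case using foldr_gen[of ws "foldr (\<lambda>a b. a \<otimes> b) vs \<one>"]
    by (intro exI[of _ "ws @ vs"]) (auto simp: foldr_closed)
qed

lemma wl_le: "set ws \<subseteq> alph S \<Longrightarrow> x = foldr (\<lambda>a b. a \<otimes> b) ws \<one> \<Longrightarrow> word_length G S x \<le> length ws"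
  unfolding word_length_def by (rule Least_le) auto

lemma wl_word: "\<exists>ws. set ws \<subseteq> alph S \<and> x = foldr (\<lambda>a b. a \<otimes> b) ws \<one> \<Longrightarrow>
  \<exists>ws. length ws = word_length G S x \<and> set ws \<subseteq> alph S \<and> x = foldr (\<lambda>a b. a \<otimes> b) ws \<one>"
  unfolding word_length_def by (rule LeastI_ex) auto

lemma wl_one: "word_length G S \<one> = 0"
  using wl_le[of "[]" S \<one>] by auto

lemma wl_alph: "s \<in> alph S \<Longrightarrow> S \<subseteq> carrier G \<Longrightarrow> word_length G S s \<le> 1"
  using wl_le[of "[s]" S s] by auto

lemma wl_mult:
  assumes "S \<subseteq> carrier G" "generate G S = carrier G" "a \<in> carrier G" "b \<in> carrier G"
  shows "word_length G S (a \<otimes> b) \<le> word_length G S a + word_length G S b"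
proof -
  obtain ws where ws: "length ws = word_length G S a" "set ws \<subseteq> alph S" "a = foldr (\<lambda>a b. a \<otimes> b) ws \<one>"
    using wl_word words_exist assms by metis
  obtain vs where vs: "length vs = word_length G S b" "set vs \<subseteq> alph S" "b = foldr (\<lambda>a b. a \<otimes> b) vs \<one>"
    using wl_word words_exist assms by metis
  have "word_length G S (a \<otimes> b) \<le> length (ws @ vs)"
    apply (rule wl_le)
  proof -
    have "set ws \<subseteq> carrier G" "set vs \<subseteq> carrier G"
      using ws vs alph_carrier[OF assms(1)] by auto
    then show "set (ws @ vs) \<subseteq> alph S" "a \<otimes> b = foldr (\<lambda>a b. a \<otimes> b) (ws @ vs) \<one>"
      using ws vs foldr_gen[of ws "foldr (\<lambda>a b. a \<otimes> b) vs \<one>"] by (auto simp: foldr_closed)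
  qed
  then show ?thesis using ws vs by simp
qed

lemma wd_tri:
  assumes "S \<subseteq> carrier G" "generate G S = carrier G" "a \<in> carrier G" "b \<in> carrier G" "c \<in> carrier G"
  shows "word_dist G S a c \<le> word_dist G S a b + word_dist G S b c"
proof -
  have "inv a \<otimes> c = (inv a \<otimes> b) \<otimes> (inv b \<otimes> c)"
    using assms by (simp add: m_assoc[symmetric]) (simp add: m_assoc)
  then show ?thesis unfolding word_dist_def using wl_mult assms by simp
qed

lemma wd_mult: "x \<in> carrier G \<Longrightarrow> z \<in> carrier G \<Longrightarrow> word_dist G S x (x \<otimes> z) = word_length G S z"
  unfolding word_dist_def by (simp add: m_assoc[symmetric])

lemma wd_self: "x \<in> carrier G \<Longrightarrow> word_dist G S x x = 0"
  unfolding word_dist_def by (simp add: wl_one)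

end

lemma lip_gen:
  assumes G1: "group G1" and G2: "group G2"
    and S1: "S1 \<subseteq> carrier G1" "generate G1 S1 = carrier G1"
    and S2: "S2 \<subseteq> carrier G2" "generate G2 S2 = carrier G2"
    and Phi: "\<Phi> \<in> carrier G1 \<rightarrow> carrier G2"
    and step: "\<forall>x\<in>carrier G1. \<forall>s\<in>S1 \<union> (\<lambda>s. inv\<^bsub>G1\<^esub> s) ` S1.
        real (word_dist G2 S2 (\<Phi> x) (\<Phi> (x \<otimes>\<^bsub>G1\<^esub> s))) \<le> K"
    and x: "x \<in> carrier G1" and y: "y \<in> carrier G1"
  shows "real (word_dist G2 S2 (\<Phi> x) (\<Phi> y)) \<le> K * real (word_dist G1 S1 x y)"
proof -
  interpret A: group G1 by fact
  interpret B: group G2 by fact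
  have main: "\<forall>x\<in>carrier G1. real (word_dist G2 S2 (\<Phi> x) (\<Phi> (x \<otimes>\<^bsub>G1\<^esub> foldr (\<lambda>a b. a \<otimes>\<^bsub>G1\<^esub> b) ws \<one>\<^bsub>G1\<^esub>)))
      \<le> K * real (length ws)" if "set ws \<subseteq> A.alph S1" for ws
    using that
  proof (induction ws)
    case Nil
    then show ?case using Phi by (simp add: B.wd_self Pi_iff)
  next
    case (Cons s ws)
    show ?case
    proof
      fix x assume x: "x \<in> carrier G1"
      have s: "s \<in> carrier G1" using Cons.prems A.alph_carrier[OF S1(1)] by auto
      have wsc: "set ws \<subseteq> carrier G1" using Cons.prems A.alph_carrier[OF S1(1)] by auto
      have xs: "x \<otimes>\<^bsub>G1\<^esub> s \<in> carrier G1" using x s by simp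
      have eq: "x \<otimes>\<^bsub>G1\<^esub> foldr (\<lambda>a b. a \<otimes>\<^bsub>G1\<^esub> b) (s # ws) \<one>\<^bsub>G1\<^esub>
         = (x \<otimes>\<^bsub>G1\<^esub> s) \<otimes>\<^bsub>G1\<^esub> foldr (\<lambda>a b. a \<otimes>\<^bsub>G1\<^esub> b) ws \<one>\<^bsub>G1\<^esub>"
        using x s A.foldr_closed[OF wsc] by (simp add: A.m_assoc)
      have c3: "\<Phi> ((x \<otimes>\<^bsub>G1\<^esub> s) \<otimes>\<^bsub>G1\<^esub> foldr (\<lambda>a b. a \<otimes>\<^bsub>G1\<^esub> b) ws \<one>\<^bsub>G1\<^esub>) \<in> carrier G2"
        using Phi xs A.foldr_closed[OF wsc] by auto
      have "real (word_dist G2 S2 (\<Phi> x) (\<Phi> ((x \<otimes>\<^bsub>G1\<^esub> s) \<otimes>\<^bsub>G1\<^esub> foldr (\<lambda>a b. a \<otimes>\<^bsub>G1\<^esub> b) ws \<one>\<^bsub>G1\<^esub>)))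
         \<le> real (word_dist G2 S2 (\<Phi> x) (\<Phi> (x \<otimes>\<^bsub>G1\<^esub> s))) +
           real (word_dist G2 S2 (\<Phi> (x \<otimes>\<^bsub>G1\<^esub> s)) (\<Phi> ((x \<otimes>\<^bsub>G1\<^esub> s) \<otimes>\<^bsub>G1\<^esub> foldr (\<lambda>a b. a \<otimes>\<^bsub>G1\<^esub> b) ws \<one>\<^bsub>G1\<^esub>)))"
        using B.wd_tri[OF S2] Phi x xs c3 by (metis Pi_mem of_nat_add of_nat_mono)
      also have "\<dots> \<le> K + K * real (length ws)"
        using step x Cons xs by (intro add_mono) auto
      finally show "real (word_dist G2 S2 (\<Phi> x) (\<Phi> (x \<otimes>\<^bsub>G1\<^esub> foldr (\<lambda>a b. a \<otimes>\<^bsub>G1\<^esub> b) (s # ws) \<one>\<^bsub>G1\<^esub>)))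
         \<le> K * real (length (s # ws))" using eq by (simp add: algebra_simps)
    qed
  qed
  obtain ws where ws: "length ws = word_dist G1 S1 x y" "set ws \<subseteq> A.alph S1"
    "inv\<^bsub>G1\<^esub> x \<otimes>\<^bsub>G1\<^esub> y = foldr (\<lambda>a b. a \<otimes>\<^bsub>G1\<^esub> b) ws \<one>\<^bsub>G1\<^esub>"
    unfolding word_dist_def using A.wl_word A.words_exist S1 x y by (metis A.inv_closed A.m_closed)
  have "y = x \<otimes>\<^bsub>G1\<^esub> (inv\<^bsub>G1\<^esub> x \<otimes>\<^bsub>G1\<^esub> y)" using x y by (simp add: A.m_assoc[symmetric])
  then show ?thesis using main[OF ws(2)] ws x by metis
qed

lemma bilip_from_gen:
  assumes G1: "group G1" and G2: "group G2"
    and S1: "S1 \<subseteq> carrier G1" "generate G1 S1 = carrier G1"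
    and S2: "S2 \<subseteq> carrier G2" "generate G2 S2 = carrier G2"
    and Phi: "\<Phi> \<in> carrier G1 \<rightarrow> carrier G2" and Psi: "\<Psi> \<in> carrier G2 \<rightarrow> carrier G1"
    and inv1: "\<And>x. x \<in> carrier G1 \<Longrightarrow> \<Psi> (\<Phi> x) = x"
    and inv2: "\<And>x. x \<in> carrier G2 \<Longrightarrow> \<Phi> (\<Psi> x) = x"
    and K: "K \<ge> 1"
    and step1: "\<forall>x\<in>carrier G1. \<forall>s\<in>S1 \<union> (\<lambda>s. inv\<^bsub>G1\<^esub> s) ` S1.
        real (word_dist G2 S2 (\<Phi> x) (\<Phi> (x \<otimes>\<^bsub>G1\<^esub> s))) \<le> K"
    and step2: "\<forall>x\<in>carrier G2. \<forall>s\<in>S2 \<union> (\<lambda>s. inv\<^bsub>G2\<^esub> s) ` S2.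
        real (word_dist G1 S1 (\<Psi> x) (\<Psi> (x \<otimes>\<^bsub>G2\<^esub> s))) \<le> K"
  shows "bilipschitz_equiv G1 S1 G2 S2"
  unfolding bilipschitz_equiv_def
proof (intro exI conjI ballI)
  show "1 \<le> K" by fact
  show "bij_betw \<Phi> (carrier G1) (carrier G2)"
    by (rule bij_betwI[OF Phi Psi]) (auto simp: inv1 inv2)
  fix x y assume x: "x \<in> carrier G1" and y: "y \<in> carrier G1"
  show "real (word_dist G2 S2 (\<Phi> x) (\<Phi> y)) \<le> K * real (word_dist G1 S1 x y)"
    by (rule lip_gen[OF G1 G2 S1 S2 Phi step1 x y])
  have "real (word_dist G1 S1 (\<Psi> (\<Phi> x)) (\<Psi> (\<Phi> y))) \<le> K * real (word_dist G2 S2 (\<Phi> x) (\<Phi> y))"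
    by (rule lip_gen[OF G2 G1 S2 S1 Psi step2]) (use x y Phi in auto)
  then show "real (word_dist G1 S1 x y) / K \<le> real (word_dist G2 S2 (\<Phi> x) (\<Phi> y))"
    using x y inv1 K by (simp add: divide_le_eq mult.commute)
qed



definition lamp1 :: "('n, 'c) monoid_scheme \<Rightarrow> ('g, 'd) monoid_scheme \<Rightarrow> 'n \<Rightarrow> ('g \<Rightarrow> 'n) \<times> 'g" where
  "lamp1 N G a = (\<lambda>x. if x = \<one>\<^bsub>G\<^esub> then a else \<one>\<^bsub>N\<^esub>, \<one>\<^bsub>G\<^esub>)"

definition shift :: "('n, 'c) monoid_scheme \<Rightarrow> ('g, 'd) monoid_scheme \<Rightarrow> 'g \<Rightarrow> ('g \<Rightarrow> 'n) \<times> 'g" where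
  "shift N G t = (\<lambda>_. \<one>\<^bsub>N\<^esub>, t)"

lemma wreath_gens_eq: "wreath_gens N S G T = lamp1 N G ` S \<union> shift N G ` T"
  unfolding wreath_gens_def lamp1_def shift_def by simp

lemma wr_carrier: "carrier (wreath N G) = {(f, g). g \<in> carrier G \<and> (\<forall>x. f x \<in> carrier N)
                     \<and> (\<forall>x. x \<notin> carrier G \<longrightarrow> f x = \<one>\<^bsub>N\<^esub>)
                     \<and> finite {x. f x \<noteq> \<one>\<^bsub>N\<^esub>}}"
  by (simp add: wreath_def)

lemma wr_mult: "(f, g) \<otimes>\<^bsub>wreath N G\<^esub> (f', g') =
   (\<lambda>x. if x \<in> carrier G then f x \<otimes>\<^bsub>N\<^esub> f' (inv\<^bsub>G\<^esub> g \<otimes>\<^bsub>G\<^esub> x) else \<one>\<^bsub>N\<^esub>, g \<otimes>\<^bsub>G\<^esub> g')"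
  by (simp add: wreath_def)

lemma wr_one: "\<one>\<^bsub>wreath N G\<^esub> = (\<lambda>_. \<one>\<^bsub>N\<^esub>, \<one>\<^bsub>G\<^esub>)"
  by (simp add: wreath_def)

locale wr = N: group N + G: group G
  for N :: "('n, 'c) monoid_scheme" and G :: "('g, 'd) monoid_scheme"
begin

lemma mem_wr: "(f, g) \<in> carrier (wreath N G) \<longleftrightarrow> g \<in> carrier G \<and> (\<forall>x. f x \<in> carrier N)
                     \<and> (\<forall>x. x \<notin> carrier G \<longrightarrow> f x = \<one>\<^bsub>N\<^esub>)
                     \<and> finite {x. f x \<noteq> \<one>\<^bsub>N\<^esub>}"
  by (simp add: wr_carrier)

lemma wr_closed:
  assumes "(f, g) \<in> carrier (wreath N G)" "(f', g') \<in> carrier (wreath N G)"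
  shows "(f, g) \<otimes>\<^bsub>wreath N G\<^esub> (f', g') \<in> carrier (wreath N G)"
proof -
  have A: "g \<in> carrier G" "\<And>x. f x \<in> carrier N" "\<And>x. x \<notin> carrier G \<Longrightarrow> f x = \<one>\<^bsub>N\<^esub>"
     "finite {x. f x \<noteq> \<one>\<^bsub>N\<^esub>}" using assms(1) by (auto simp: mem_wr)
  have B: "g' \<in> carrier G" "\<And>x. f' x \<in> carrier N" "\<And>x. x \<notin> carrier G \<Longrightarrow> f' x = \<one>\<^bsub>N\<^esub>"
     "finite {x. f' x \<noteq> \<one>\<^bsub>N\<^esub>}" using assms(2) by (auto simp: mem_wr)
  have "{x. (if x \<in> carrier G then f x \<otimes>\<^bsub>N\<^esub> f' (inv\<^bsub>G\<^esub> g \<otimes>\<^bsub>G\<^esub> x) else \<one>\<^bsub>N\<^esub>) \<noteq> \<one>\<^bsub>N\<^esub>}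
     \<subseteq> {x. f x \<noteq> \<one>\<^bsub>N\<^esub>} \<union> (\<lambda>y. g \<otimes>\<^bsub>G\<^esub> y) ` {x. f' x \<noteq> \<one>\<^bsub>N\<^esub>}"
  proof
    fix x assume x: "x \<in> {x. (if x \<in> carrier G then f x \<otimes>\<^bsub>N\<^esub> f' (inv\<^bsub>G\<^esub> g \<otimes>\<^bsub>G\<^esub> x) else \<one>\<^bsub>N\<^esub>) \<noteq> \<one>\<^bsub>N\<^esub>}"
    then have xG: "x \<in> carrier G" by (auto split: if_splits)
    show "x \<in> {x. f x \<noteq> \<one>\<^bsub>N\<^esub>} \<union> (\<lambda>y. g \<otimes>\<^bsub>G\<^esub> y) ` {x. f' x \<noteq> \<one>\<^bsub>N\<^esub>}"
    proof (cases "f x = \<one>\<^bsub>N\<^esub>")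
      case True
      then have "f' (inv\<^bsub>G\<^esub> g \<otimes>\<^bsub>G\<^esub> x) \<noteq> \<one>\<^bsub>N\<^esub>" using x xG B by auto
      moreover have "x = g \<otimes>\<^bsub>G\<^esub> (inv\<^bsub>G\<^esub> g \<otimes>\<^bsub>G\<^esub> x)" using xG A by (simp add: G.m_assoc[symmetric])
      ultimately show ?thesis by blast
    qed auto
  qed
  then have "finite {x. (if x \<in> carrier G then f x \<otimes>\<^bsub>N\<^esub> f' (inv\<^bsub>G\<^esub> g \<otimes>\<^bsub>G\<^esub> x) else \<one>\<^bsub>N\<^esub>) \<noteq> \<one>\<^bsub>N\<^esub>}"
    by (rule finite_subset) (use A B in auto)
  then show ?thesis using A B by (simp add: wr_mult mem_wr)
qed

lemma wr_group: "group (wreath N G)"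
proof (rule groupI)
  fix x y assume "x \<in> carrier (wreath N G)" "y \<in> carrier (wreath N G)"
  then show "x \<otimes>\<^bsub>wreath N G\<^esub> y \<in> carrier (wreath N G)"
    using wr_closed by (cases x, cases y) auto
next
  show "\<one>\<^bsub>wreath N G\<^esub> \<in> carrier (wreath N G)" by (auto simp: wr_one mem_wr)
next
  fix x y z assume xyz: "x \<in> carrier (wreath N G)" "y \<in> carrier (wreath N G)" "z \<in> carrier (wreath N G)"
  obtain f g f' g' f'' g'' where e: "x = (f, g)" "y = (f', g')" "z = (f'', g'')"
    by (cases x, cases y, cases z) auto
  have A: "g \<in> carrier G" "\<And>x. f x \<in> carrier N"
    "g' \<in> carrier G" "\<And>x. f' x \<in> carrier N"
    "g'' \<in> carrier G" "\<And>x. f'' x \<in> carrier N"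
    using xyz e by (auto simp: mem_wr)
  show "x \<otimes>\<^bsub>wreath N G\<^esub> y \<otimes>\<^bsub>wreath N G\<^esub> z = x \<otimes>\<^bsub>wreath N G\<^esub> (y \<otimes>\<^bsub>wreath N G\<^esub> z)"
    unfolding e using A by (auto simp: wr_mult G.m_assoc N.m_assoc G.inv_mult_group)
next
  fix x assume x: "x \<in> carrier (wreath N G)"
  obtain f g where e: "x = (f, g)" by (cases x) auto
  show "\<one>\<^bsub>wreath N G\<^esub> \<otimes>\<^bsub>wreath N G\<^esub> x = x"
    using x unfolding e by (auto simp: wr_one wr_mult mem_wr)
next
  fix x assume x: "x \<in> carrier (wreath N G)"
  obtain f g where e: "x = (f, g)" by (cases x) auto
  have A: "g \<in> carrier G" "\<And>x. f x \<in> carrier N" "\<And>x. x \<notin> carrier G \<Longrightarrow> f x = \<one>\<^bsub>N\<^esub>"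
     "finite {x. f x \<noteq> \<one>\<^bsub>N\<^esub>}" using x e by (auto simp: mem_wr)
  define y where "y = (\<lambda>x. if x \<in> carrier G then inv\<^bsub>N\<^esub> (f (g \<otimes>\<^bsub>G\<^esub> x)) else \<one>\<^bsub>N\<^esub>, inv\<^bsub>G\<^esub> g)"
  have "{x. (if x \<in> carrier G then inv\<^bsub>N\<^esub> (f (g \<otimes>\<^bsub>G\<^esub> x)) else \<one>\<^bsub>N\<^esub>) \<noteq> \<one>\<^bsub>N\<^esub>}
     \<subseteq> (\<lambda>y. inv\<^bsub>G\<^esub> g \<otimes>\<^bsub>G\<^esub> y) ` {x. f x \<noteq> \<one>\<^bsub>N\<^esub>}"
  proof
    fix x assume x: "x \<in> {x. (if x \<in> carrier G then inv\<^bsub>N\<^esub> (f (g \<otimes>\<^bsub>G\<^esub> x)) else \<one>\<^bsub>N\<^esub>) \<noteq> \<one>\<^bsub>N\<^esub>}"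
    then have xG: "x \<in> carrier G" by (auto split: if_splits)
    then have "f (g \<otimes>\<^bsub>G\<^esub> x) \<noteq> \<one>\<^bsub>N\<^esub>" using x by auto
    moreover have "x = inv\<^bsub>G\<^esub> g \<otimes>\<^bsub>G\<^esub> (g \<otimes>\<^bsub>G\<^esub> x)" using xG A by (simp add: G.m_assoc[symmetric])
    ultimately show "x \<in> (\<lambda>y. inv\<^bsub>G\<^esub> g \<otimes>\<^bsub>G\<^esub> y) ` {x. f x \<noteq> \<one>\<^bsub>N\<^esub>}" by blast
  qed
  then have "finite {x. (if x \<in> carrier G then inv\<^bsub>N\<^esub> (f (g \<otimes>\<^bsub>G\<^esub> x)) else \<one>\<^bsub>N\<^esub>) \<noteq> \<one>\<^bsub>N\<^esub>}"
    by (rule finite_subset) (use A in auto)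
  then have "y \<in> carrier (wreath N G)"
    using A unfolding y_def by (simp add: mem_wr)
  moreover have "y \<otimes>\<^bsub>wreath N G\<^esub> x = \<one>\<^bsub>wreath N G\<^esub>"
    unfolding y_def e using A by (auto simp: wr_mult wr_one G.m_assoc[symmetric])
  ultimately show "\<exists>y\<in>carrier (wreath N G). y \<otimes>\<^bsub>wreath N G\<^esub> x = \<one>\<^bsub>wreath N G\<^esub>" by blast
qed

sublocale W: group "wreath N G" by (rule wr_group)

lemma shift_mem: "t \<in> carrier G \<Longrightarrow> shift N G t \<in> carrier (wreath N G)"
  by (simp add: shift_def mem_wr)

lemma lamp1_mem: "a \<in> carrier N \<Longrightarrow> lamp1 N G a \<in> carrier (wreath N G)"
proof -
  assume a: "a \<in> carrier N"
  have "{x. (if x = \<one>\<^bsub>G\<^esub> then a else \<one>\<^bsub>N\<^esub>) \<noteq> \<one>\<^bsub>N\<^esub>} \<subseteq> {\<one>\<^bsub>G\<^esub>}" by auto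
  then show ?thesis using a by (auto simp: lamp1_def mem_wr intro: finite_subset)
qed

lemma mult_shift:
  assumes "(c, p) \<in> carrier (wreath N G)" "t \<in> carrier G"
  shows "(c, p) \<otimes>\<^bsub>wreath N G\<^esub> shift N G t = (c, p \<otimes>\<^bsub>G\<^esub> t)"
  using assms by (auto simp: shift_def wr_mult mem_wr)

lemma mult_lamp1:
  assumes "(c, p) \<in> carrier (wreath N G)" "a \<in> carrier N"
  shows "(c, p) \<otimes>\<^bsub>wreath N G\<^esub> lamp1 N G a = (c(p := c p \<otimes>\<^bsub>N\<^esub> a), p)"
proof -
  have A: "p \<in> carrier G" "\<And>x. c x \<in> carrier N" "\<And>x. x \<notin> carrier G \<Longrightarrow> c x = \<one>\<^bsub>N\<^esub>"
    using assms by (auto simp: mem_wr)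
  have "\<And>x. x \<in> carrier G \<Longrightarrow> (inv\<^bsub>G\<^esub> p \<otimes>\<^bsub>G\<^esub> x = \<one>\<^bsub>G\<^esub>) = (x = p)"
    using A by (metis G.inv_closed G.inv_inv G.inv_equality G.r_inv)
  then show ?thesis using A assms(2) by (auto simp: lamp1_def wr_mult)
qed

lemma shift_inv: "t \<in> carrier G \<Longrightarrow> inv\<^bsub>wreath N G\<^esub> (shift N G t) = shift N G (inv\<^bsub>G\<^esub> t)"
  by (rule W.inv_equality) (auto simp: mem_wr shift_def wr_one wr_mult)


lemma lamp1_one: "lamp1 N G \<one>\<^bsub>N\<^esub> = \<one>\<^bsub>wreath N G\<^esub>"
  by (auto simp: lamp1_def wr_one)

lemma lamp1_mult: "a \<in> carrier N \<Longrightarrow> b \<in> carrier N \<Longrightarrow>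
  lamp1 N G (a \<otimes>\<^bsub>N\<^esub> b) = lamp1 N G a \<otimes>\<^bsub>wreath N G\<^esub> lamp1 N G b"
proof -
  assume a: "a \<in> carrier N" and b: "b \<in> carrier N"
  have "lamp1 N G a \<otimes>\<^bsub>wreath N G\<^esub> lamp1 N G b
     = ((\<lambda>x. if x = \<one>\<^bsub>G\<^esub> then a else \<one>\<^bsub>N\<^esub>)(\<one>\<^bsub>G\<^esub> := a \<otimes>\<^bsub>N\<^esub> b), \<one>\<^bsub>G\<^esub>)"
    using mult_lamp1[of "\<lambda>x. if x = \<one>\<^bsub>G\<^esub> then a else \<one>\<^bsub>N\<^esub>" "\<one>\<^bsub>G\<^esub>" b] lamp1_mem[OF a] a b
    by (simp add: lamp1_def)
  then show ?thesis by (auto simp: lamp1_def)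
qed

lemma lamp1_inv: "a \<in> carrier N \<Longrightarrow> inv\<^bsub>wreath N G\<^esub> (lamp1 N G a) = lamp1 N G (inv\<^bsub>N\<^esub> a)"
  by (rule W.inv_equality) (auto simp: lamp1_mult[symmetric] lamp1_one lamp1_mem)

lemma shift_one: "shift N G \<one>\<^bsub>G\<^esub> = \<one>\<^bsub>wreath N G\<^esub>"
  by (auto simp: shift_def wr_one)

lemma shift_mult: "a \<in> carrier G \<Longrightarrow> b \<in> carrier G \<Longrightarrow>
  shift N G (a \<otimes>\<^bsub>G\<^esub> b) = shift N G a \<otimes>\<^bsub>wreath N G\<^esub> shift N G b"
  using mult_shift[of "\<lambda>_. \<one>\<^bsub>N\<^esub>" a b] by (simp add: shift_def mem_wr)

context
  fixes SN SG
  assumes SN: "SN \<subseteq> carrier N" "generate N SN = carrier N"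
    and SG: "SG \<subseteq> carrier G" "generate G SG = carrier G"
begin

lemma gens_carrier: "wreath_gens N SN G SG \<subseteq> carrier (wreath N G)"
  using SN SG by (auto simp: wreath_gens_eq lamp1_mem shift_mem)

lemma shift_gen: "t \<in> carrier G \<Longrightarrow> shift N G t \<in> generate (wreath N G) (wreath_gens N SN G SG)"
proof -
  assume "t \<in> carrier G"
  then have "t \<in> generate G SG" using SG by simp
  then show ?thesis
  proof (induction rule: generate.induct)
    case one
    then show ?case by (simp add: shift_one generate.one)
  next
    case (incl h)
    then show ?case by (auto simp: wreath_gens_eq intro: generate.incl)
  next
    case (inv h)
    then have "shift N G (inv\<^bsub>G\<^esub> h) = inv\<^bsub>wreath N G\<^esub> (shift N G h)" using SG by (auto simp: shift_inv)
    then show ?case using inv by (auto simp: wreath_gens_eq intro: generate.inv)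
  next
    case (eng h1 h2)
    then have "h1 \<in> carrier G" "h2 \<in> carrier G" using SG G.generate_in_carrier by auto
    then show ?case using eng by (simp add: shift_mult generate.eng)
  qed
qed

lemma lamp1_gen: "a \<in> carrier N \<Longrightarrow> lamp1 N G a \<in> generate (wreath N G) (wreath_gens N SN G SG)"
proof -
  assume "a \<in> carrier N"
  then have "a \<in> generate N SN" using SN by simp
  then show ?thesis
  proof (induction rule: generate.induct)
    case one
    then show ?case by (simp add: lamp1_one generate.one)
  next
    case (incl h)
    then show ?case by (auto simp: wreath_gens_eq intro: generate.incl)
  next
    case (inv h)
    then have "lamp1 N G (inv\<^bsub>N\<^esub> h) = inv\<^bsub>wreath N G\<^esub> (lamp1 N G h)" using SN by (auto simp: lamp1_inv)
    then show ?case using inv by (auto simp: wreath_gens_eq intro: generate.inv)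
  next
    case (eng h1 h2)
    then have "h1 \<in> carrier N" "h2 \<in> carrier N" using SN N.generate_in_carrier by auto
    then show ?case using eng by (simp add: lamp1_mult generate.eng)
  qed
qed

lemma base_gen: "\<forall>c. (c, \<one>\<^bsub>G\<^esub>) \<in> carrier (wreath N G) \<and> card {x. c x \<noteq> \<one>\<^bsub>N\<^esub>} = n
   \<longrightarrow> (c, \<one>\<^bsub>G\<^esub>) \<in> generate (wreath N G) (wreath_gens N SN G SG)"
proof (induction n)
  case 0
  show ?case
  proof (intro allI impI)
    fix c assume c: "(c, \<one>\<^bsub>G\<^esub>) \<in> carrier (wreath N G) \<and> card {x. c x \<noteq> \<one>\<^bsub>N\<^esub>} = 0"
    then have "{x. c x \<noteq> \<one>\<^bsub>N\<^esub>} = {}" by (auto simp: mem_wr)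
    then have "c = (\<lambda>_. \<one>\<^bsub>N\<^esub>)" by auto
    then show "(c, \<one>\<^bsub>G\<^esub>) \<in> generate (wreath N G) (wreath_gens N SN G SG)"
      using generate.one[of "wreath N G"] by (simp add: wr_one)
  qed
next
  case (Suc n)
  show ?case
  proof (intro allI impI)
    fix c assume c: "(c, \<one>\<^bsub>G\<^esub>) \<in> carrier (wreath N G) \<and> card {x. c x \<noteq> \<one>\<^bsub>N\<^esub>} = Suc n"
    have A: "\<And>x. c x \<in> carrier N" "\<And>x. x \<notin> carrier G \<Longrightarrow> c x = \<one>\<^bsub>N\<^esub>"
     "finite {x. c x \<noteq> \<one>\<^bsub>N\<^esub>}" using c by (auto simp: mem_wr)
    obtain x0 where x0: "c x0 \<noteq> \<one>\<^bsub>N\<^esub>" using c by (metis (mono_tags, lifting) Collect_empty_eq card.empty nat.distinct(1))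
    then have x0G: "x0 \<in> carrier G" using A by auto
    define c0 where "c0 = c(x0 := \<one>\<^bsub>N\<^esub>)"
    have supp: "{x. c0 x \<noteq> \<one>\<^bsub>N\<^esub>} = {x. c x \<noteq> \<one>\<^bsub>N\<^esub>} - {x0}" by (auto simp: c0_def)
    have c0: "(c0, \<one>\<^bsub>G\<^esub>) \<in> carrier (wreath N G)" using A unfolding mem_wr supp
      by (auto simp: c0_def)
    have "card {x. c0 x \<noteq> \<one>\<^bsub>N\<^esub>} = n" unfolding supp using c x0 A by simp
    then have g0: "(c0, \<one>\<^bsub>G\<^esub>) \<in> generate (wreath N G) (wreath_gens N SN G SG)" using Suc c0 by blast
    have e1: "(c0, \<one>\<^bsub>G\<^esub>) \<otimes>\<^bsub>wreath N G\<^esub> shift N G x0 = (c0, x0)"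
      using mult_shift[OF c0 x0G] x0G by simp
    have c0x: "(c0, x0) \<in> carrier (wreath N G)" using c0 x0G by (simp add: mem_wr)
    have e2: "(c0, x0) \<otimes>\<^bsub>wreath N G\<^esub> lamp1 N G (c x0) = (c, x0)"
      using mult_lamp1[OF c0x A(1)] A by (auto simp: c0_def)
    have cx: "(c, x0) \<in> carrier (wreath N G)" using A x0G by (simp add: mem_wr)
    have e3: "(c, x0) \<otimes>\<^bsub>wreath N G\<^esub> shift N G (inv\<^bsub>G\<^esub> x0) = (c, \<one>\<^bsub>G\<^esub>)"
      using mult_shift[OF cx] x0G by simp
    have "(c, \<one>\<^bsub>G\<^esub>) = (((c0, \<one>\<^bsub>G\<^esub>) \<otimes>\<^bsub>wreath N G\<^esub> shift N G x0) \<otimes>\<^bsub>wreath N G\<^esub> lamp1 N G (c x0))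
        \<otimes>\<^bsub>wreath N G\<^esub> shift N G (inv\<^bsub>G\<^esub> x0)" using e1 e2 e3 by simp
    then show "(c, \<one>\<^bsub>G\<^esub>) \<in> generate (wreath N G) (wreath_gens N SN G SG)"
      using g0 shift_gen lamp1_gen x0G A(1) by (metis generate.eng G.inv_closed)
  qed
qed

lemma wr_generate: "generate (wreath N G) (wreath_gens N SN G SG) = carrier (wreath N G)"
proof
  show "generate (wreath N G) (wreath_gens N SN G SG) \<subseteq> carrier (wreath N G)"
    using W.generate_incl[OF gens_carrier] .
  show "carrier (wreath N G) \<subseteq> generate (wreath N G) (wreath_gens N SN G SG)"
  proof
    fix x assume x: "x \<in> carrier (wreath N G)"
    obtain c p where e: "x = (c, p)" by (cases x) auto
    have c1: "(c, \<one>\<^bsub>G\<^esub>) \<in> carrier (wreath N G)" and p: "p \<in> carrier G"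
      using x e by (auto simp: mem_wr)
    have "(c, \<one>\<^bsub>G\<^esub>) \<otimes>\<^bsub>wreath N G\<^esub> shift N G p = x"
      using mult_shift[OF c1 p] p e by simp
    then show "x \<in> generate (wreath N G) (wreath_gens N SN G SG)"
      using base_gen c1 shift_gen[OF p] by (metis generate.eng)
  qed
qed

end

end



definition lift :: "('n, 'c) monoid_scheme \<Rightarrow> ('h, 'e) monoid_scheme \<Rightarrow> ('g \<Rightarrow> 'h) \<Rightarrow> ('h \<Rightarrow> 'g)
   \<Rightarrow> ('g \<Rightarrow> 'n) \<times> 'g \<Rightarrow> ('h \<Rightarrow> 'n) \<times> 'h" where
  "lift N H f g = (\<lambda>(c, p). (\<lambda>y. if y \<in> carrier H then c (g y) else \<one>\<^bsub>N\<^esub>, f p))"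

lemma (in wr) wl_shift:
  assumes SN: "SN \<subseteq> carrier N" "generate N SN = carrier N"
    and SG: "SG \<subseteq> carrier G" "generate G SG = carrier G"
    and h: "h \<in> carrier G"
  shows "word_length (wreath N G) (wreath_gens N SN G SG) (shift N G h) \<le> word_length G SG h"
proof -
  obtain ws where ws: "length ws = word_length G SG h" "set ws \<subseteq> G.alph SG"
    "h = foldr (\<lambda>a b. a \<otimes>\<^bsub>G\<^esub> b) ws \<one>\<^bsub>G\<^esub>"
    using G.wl_word G.words_exist SG h by metis
  have "set ws \<subseteq> carrier G" using ws(2) SG by auto
  then have fe: "foldr (\<lambda>a b. a \<otimes>\<^bsub>wreath N G\<^esub> b) (map (shift N G) ws) \<one>\<^bsub>wreath N G\<^esub>
     = shift N G (foldr (\<lambda>a b. a \<otimes>\<^bsub>G\<^esub> b) ws \<one>\<^bsub>G\<^esub>)"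
    by (induction ws) (auto simp: shift_one shift_mult G.foldr_closed)
  have "set (map (shift N G) ws) \<subseteq> W.alph (wreath_gens N SN G SG)"
  proof
    fix z assume "z \<in> set (map (shift N G) ws)"
    then obtain t where t: "t \<in> set ws" "z = shift N G t" by auto
    then have "t \<in> SG \<or> (\<exists>t0\<in>SG. t = inv\<^bsub>G\<^esub> t0)" using ws(2) by auto
    then show "z \<in> W.alph (wreath_gens N SN G SG)"
    proof
      assume "t \<in> SG" then show ?thesis using t by (auto simp: wreath_gens_eq)
    next
      assume "\<exists>t0\<in>SG. t = inv\<^bsub>G\<^esub> t0"
      then obtain t0 where "t0 \<in> SG" "t = inv\<^bsub>G\<^esub> t0" by blast
      then have "z = inv\<^bsub>wreath N G\<^esub> (shift N G t0)" "shift N G t0 \<in> wreath_gens N SN G SG"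
        using t SG shift_inv by (auto simp: wreath_gens_eq)
      then show ?thesis by blast
    qed
  qed
  then have "word_length (wreath N G) (wreath_gens N SN G SG) (shift N G h) \<le> length (map (shift N G) ws)"
    using fe ws(3) by (intro W.wl_le) auto
  then show ?thesis using ws(1) by simp
qed

lemma (in wr) alph_cases:
  assumes SN: "SN \<subseteq> carrier N" and SG: "SG \<subseteq> carrier G"
    and s: "s \<in> W.alph (wreath_gens N SN G SG)"
  shows "(\<exists>a\<in>N.alph SN. s = lamp1 N G a) \<or> (\<exists>t\<in>G.alph SG. s = shift N G t)"
  using s SN SG by (auto simp: wreath_gens_eq lamp1_inv shift_inv subset_iff)

lemma (in wr) alph_lamp1:
  assumes SN: "SN \<subseteq> carrier N" and a: "a \<in> N.alph SN"
  shows "lamp1 N G a \<in> W.alph (wreath_gens N SN G SG)"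
proof -
  from a consider "a \<in> SN" | x where "x \<in> SN" "a = inv\<^bsub>N\<^esub> x" by auto
  then show ?thesis
  proof cases
    case 1 then show ?thesis by (auto simp: wreath_gens_eq)
  next
    case 2
    then have "lamp1 N G a = inv\<^bsub>wreath N G\<^esub> (lamp1 N G x)" using SN lamp1_inv by auto
    moreover have "lamp1 N G x \<in> wreath_gens N SN G SG" using 2 by (auto simp: wreath_gens_eq)
    ultimately show ?thesis by blast
  qed
qed

context
  fixes N :: "('n, 'c) monoid_scheme" and G :: "('g, 'd) monoid_scheme"
    and H :: "('h, 'e) monoid_scheme"
    and SN :: "'n set" and SG :: "'g set" and SH :: "'h set"
    and f :: "'g \<Rightarrow> 'h" and g :: "'h \<Rightarrow> 'g"
  assumes grps: "group N" "group G" "group H"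
    and SN: "SN \<subseteq> carrier N" "generate N SN = carrier N"
    and SG: "SG \<subseteq> carrier G" "generate G SG = carrier G"
    and SH: "SH \<subseteq> carrier H" "generate H SH = carrier H"
    and f: "f \<in> carrier G \<rightarrow> carrier H" and g: "g \<in> carrier H \<rightarrow> carrier G"
    and gf: "\<And>x. x \<in> carrier G \<Longrightarrow> g (f x) = x"
    and fg: "\<And>y. y \<in> carrier H \<Longrightarrow> f (g y) = y"
begin

interpretation WG: wr N G using grps by (simp add: wr_def)
interpretation WH: wr N H using grps by (simp add: wr_def)

lemma lift_mem:
  assumes x: "x \<in> carrier (wreath N G)"
  shows "lift N H f g x \<in> carrier (wreath N H)"
proof -
  obtain c p where e: "x = (c, p)" by (cases x) auto
  have A: "p \<in> carrier G" "\<And>x. c x \<in> carrier N" "\<And>x. x \<notin> carrier G \<Longrightarrow> c x = \<one>\<^bsub>N\<^esub>"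
     "finite {x. c x \<noteq> \<one>\<^bsub>N\<^esub>}" using x e by (auto simp: WG.mem_wr)
  have "{y. (if y \<in> carrier H then c (g y) else \<one>\<^bsub>N\<^esub>) \<noteq> \<one>\<^bsub>N\<^esub>} \<subseteq> f ` {x. c x \<noteq> \<one>\<^bsub>N\<^esub>}"
  proof
    fix y assume y: "y \<in> {y. (if y \<in> carrier H then c (g y) else \<one>\<^bsub>N\<^esub>) \<noteq> \<one>\<^bsub>N\<^esub>}"
    then have "y \<in> carrier H" by (auto split: if_splits)
    then show "y \<in> f ` {x. c x \<noteq> \<one>\<^bsub>N\<^esub>}" using y fg by (auto intro!: image_eqI[of y f "g y"])
  qed
  then have "finite {y. (if y \<in> carrier H then c (g y) else \<one>\<^bsub>N\<^esub>) \<noteq> \<one>\<^bsub>N\<^esub>}"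
    by (rule finite_subset) (use A in auto)
  then show ?thesis using A f unfolding e by (auto simp: lift_def WH.mem_wr)
qed

lemma lift_inv:
  assumes x: "x \<in> carrier (wreath N G)"
  shows "lift N G g f (lift N H f g x) = x"
proof -
  obtain c p where e: "x = (c, p)" by (cases x) auto
  have A: "p \<in> carrier G" "\<And>x. c x \<in> carrier N" "\<And>x. x \<notin> carrier G \<Longrightarrow> c x = \<one>\<^bsub>N\<^esub>"
     using x e by (auto simp: WG.mem_wr)
  show ?thesis unfolding e lift_def using A f gf by (auto simp: fun_eq_iff)
qed

lemma lift_step:
  assumes C: "C \<ge> 1"
    and bound: "\<forall>p\<in>carrier G. \<forall>t\<in>SG \<union> (\<lambda>s. inv\<^bsub>G\<^esub> s) ` SG.
        real (word_dist H SH (f p) (f (p \<otimes>\<^bsub>G\<^esub> t))) \<le> C"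
  shows "\<forall>x\<in>carrier (wreath N G). \<forall>s\<in>wreath_gens N SN G SG \<union> (\<lambda>s. inv\<^bsub>wreath N G\<^esub> s) ` wreath_gens N SN G SG.
    real (word_dist (wreath N H) (wreath_gens N SN H SH) (lift N H f g x) (lift N H f g (x \<otimes>\<^bsub>wreath N G\<^esub> s))) \<le> C"
proof (intro ballI)
  fix x s assume x: "x \<in> carrier (wreath N G)"
    and s: "s \<in> wreath_gens N SN G SG \<union> (\<lambda>s. inv\<^bsub>wreath N G\<^esub> s) ` wreath_gens N SN G SG"
  obtain c p where e: "x = (c, p)" by (cases x) auto
  have A: "p \<in> carrier G" "\<And>x. c x \<in> carrier N" "\<And>x. x \<notin> carrier G \<Longrightarrow> c x = \<one>\<^bsub>N\<^esub>"
     using x e by (auto simp: WG.mem_wr)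
  define c' where "c' = (\<lambda>y. if y \<in> carrier H then c (g y) else \<one>\<^bsub>N\<^esub>)"
  have lx: "lift N H f g x = (c', f p)" unfolding e lift_def c'_def by simp
  have lxm: "(c', f p) \<in> carrier (wreath N H)" using lift_mem[OF x] lx by simp
  have fp: "f p \<in> carrier H" using f A by auto
  from WG.alph_cases[OF SN(1) SG(1) s]
  show "real (word_dist (wreath N H) (wreath_gens N SN H SH) (lift N H f g x) (lift N H f g (x \<otimes>\<^bsub>wreath N G\<^esub> s))) \<le> C"
  proof
    assume "\<exists>a\<in>WG.N.alph SN. s = lamp1 N G a"
    then obtain a where a: "a \<in> WG.N.alph SN" "s = lamp1 N G a" by blast
    have aN: "a \<in> carrier N" using a SN by auto
    have "x \<otimes>\<^bsub>wreath N G\<^esub> s = (c(p := c p \<otimes>\<^bsub>N\<^esub> a), p)"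
      using WG.mult_lamp1[of c p a] x e aN a by simp
    then have "lift N H f g (x \<otimes>\<^bsub>wreath N G\<^esub> s) = (c'(f p := c' (f p) \<otimes>\<^bsub>N\<^esub> a), f p)"
      unfolding lift_def c'_def using fp gf fg A by (auto simp: fun_eq_iff)
    also have "\<dots> = lift N H f g x \<otimes>\<^bsub>wreath N H\<^esub> lamp1 N H a"
      using WH.mult_lamp1[OF lxm aN] lx by simp
    finally have "word_dist (wreath N H) (wreath_gens N SN H SH) (lift N H f g x) (lift N H f g (x \<otimes>\<^bsub>wreath N G\<^esub> s))
       = word_length (wreath N H) (wreath_gens N SN H SH) (lamp1 N H a)"
      using WH.W.wd_mult lift_mem[OF x] WH.lamp1_mem[OF aN] by simp
    also have "\<dots> \<le> 1"
      by (rule WH.W.wl_alph[OF WH.alph_lamp1[OF SN(1) a(1)]]) (use WH.gens_carrier[OF SN SH] in auto)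
    finally show ?thesis using C by simp
  next
    assume "\<exists>t\<in>WG.G.alph SG. s = shift N G t"
    then obtain t where t: "t \<in> WG.G.alph SG" "s = shift N G t" by blast
    have tG: "t \<in> carrier G" using t SG by auto
    have pt: "p \<otimes>\<^bsub>G\<^esub> t \<in> carrier G" using A tG by simp
    then have fpt: "f (p \<otimes>\<^bsub>G\<^esub> t) \<in> carrier H" using f by auto
    define h where "h = inv\<^bsub>H\<^esub> (f p) \<otimes>\<^bsub>H\<^esub> f (p \<otimes>\<^bsub>G\<^esub> t)"
    have hH: "h \<in> carrier H" using fp fpt by (simp add: h_def)
    have "x \<otimes>\<^bsub>wreath N G\<^esub> s = (c, p \<otimes>\<^bsub>G\<^esub> t)"
      using WG.mult_shift[of c p t] x e tG t by simp
    then have "lift N H f g (x \<otimes>\<^bsub>wreath N G\<^esub> s) = (c', f p \<otimes>\<^bsub>H\<^esub> h)"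
      unfolding lift_def c'_def h_def using fp fpt by (simp add: WH.G.m_assoc[symmetric])
    also have "\<dots> = lift N H f g x \<otimes>\<^bsub>wreath N H\<^esub> shift N H h"
      using WH.mult_shift[OF lxm hH] lx by simp
    finally have "word_dist (wreath N H) (wreath_gens N SN H SH) (lift N H f g x) (lift N H f g (x \<otimes>\<^bsub>wreath N G\<^esub> s))
       = word_length (wreath N H) (wreath_gens N SN H SH) (shift N H h)"
      using WH.W.wd_mult lift_mem[OF x] WH.shift_mem[OF hH] by simp
    also have "\<dots> \<le> word_length H SH h" by (rule WH.wl_shift[OF SN SH hH])
    also have "\<dots> = word_dist H SH (f p) (f (p \<otimes>\<^bsub>G\<^esub> t))" by (simp add: word_dist_def h_def)
    finally show ?thesis using bound A(1) t(1) by (meson of_nat_mono order_trans)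
  qed
qed

end



theorem lemma5p3:
  fixes N :: "('n, 'c) monoid_scheme" and G :: "('g, 'd) monoid_scheme"
    and H :: "('h, 'e) monoid_scheme"
    and SN :: "'n set" and SG :: "'g set" and SH :: "'h set"
  assumes "group N" and "group G" and "group H"
    and "fin_gen_set N SN" and "fin_gen_set G SG" and "fin_gen_set H SH"
    and "bilipschitz_equiv G SG H SH"
  shows "bilipschitz_equiv (wreath N G) (wreath_gens N SN G SG) (wreath N H) (wreath_gens N SN H SH)"
proof -
  note grps = assms(1-3)
  interpret WG: wr N G using grps by (simp add: wr_def)
  interpret WH: wr N H using grps by (simp add: wr_def)
  have SN: "SN \<subseteq> carrier N" "generate N SN = carrier N" using assms(4) by (auto simp: fin_gen_set_def)
  have SG: "SG \<subseteq> carrier G" "generate G SG = carrier G" using assms(5) by (auto simp: fin_gen_set_def)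
  have SH: "SH \<subseteq> carrier H" "generate H SH = carrier H" using assms(6) by (auto simp: fin_gen_set_def)
  obtain f and C :: real where C: "C \<ge> 1" and bij: "bij_betw f (carrier G) (carrier H)"
    and lip: "\<forall>x\<in>carrier G. \<forall>y\<in>carrier G.
            real (word_dist G SG x y) / C \<le> real (word_dist H SH (f x) (f y)) \<and>
            real (word_dist H SH (f x) (f y)) \<le> C * real (word_dist G SG x y)"
    using assms(7) unfolding bilipschitz_equiv_def by blast
  define g where "g = inv_into (carrier G) f"
  have f: "f \<in> carrier G \<rightarrow> carrier H" using bij by (rule bij_betw_imp_funcset)
  have g: "g \<in> carrier H \<rightarrow> carrier G" unfolding g_def
    using bij_betw_inv_into[OF bij] by (rule bij_betw_imp_funcset)
  have gf: "\<And>x. x \<in> carrier G \<Longrightarrow> g (f x) = x" unfolding g_def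
    using bij by (simp add: bij_betw_inv_into_left)
  have fg: "\<And>y. y \<in> carrier H \<Longrightarrow> f (g y) = y" unfolding g_def
    using bij by (simp add: bij_betw_inv_into_right)
  have bf: "\<forall>p\<in>carrier G. \<forall>t\<in>SG \<union> (\<lambda>s. inv\<^bsub>G\<^esub> s) ` SG.
        real (word_dist H SH (f p) (f (p \<otimes>\<^bsub>G\<^esub> t))) \<le> C"
  proof (intro ballI)
    fix p t assume p: "p \<in> carrier G" and t: "t \<in> SG \<union> (\<lambda>s. inv\<^bsub>G\<^esub> s) ` SG"
    have tG: "t \<in> carrier G" using t SG by auto
    have "real (word_dist H SH (f p) (f (p \<otimes>\<^bsub>G\<^esub> t))) \<le> C * real (word_dist G SG p (p \<otimes>\<^bsub>G\<^esub> t))"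
      using lip p tG by simp
    also have "word_dist G SG p (p \<otimes>\<^bsub>G\<^esub> t) = word_length G SG t" using p tG by (simp add: WG.G.wd_mult)
    also have "C * real (word_length G SG t) \<le> C * 1"
      using WG.G.wl_alph[OF t SG(1)] C by (intro mult_left_mono) auto
    finally show "real (word_dist H SH (f p) (f (p \<otimes>\<^bsub>G\<^esub> t))) \<le> C" by simp
  qed
  have bg: "\<forall>p\<in>carrier H. \<forall>t\<in>SH \<union> (\<lambda>s. inv\<^bsub>H\<^esub> s) ` SH.
        real (word_dist G SG (g p) (g (p \<otimes>\<^bsub>H\<^esub> t))) \<le> C"
  proof (intro ballI)
    fix p t assume p: "p \<in> carrier H" and t: "t \<in> SH \<union> (\<lambda>s. inv\<^bsub>H\<^esub> s) ` SH"
    have tH: "t \<in> carrier H" using t SH by auto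
    have gp: "g p \<in> carrier G" "g (p \<otimes>\<^bsub>H\<^esub> t) \<in> carrier G" using g p tH by auto
    have "real (word_dist G SG (g p) (g (p \<otimes>\<^bsub>H\<^esub> t))) / C \<le> real (word_dist H SH (f (g p)) (f (g (p \<otimes>\<^bsub>H\<^esub> t))))"
      using lip gp by blast
    then have "real (word_dist G SG (g p) (g (p \<otimes>\<^bsub>H\<^esub> t))) \<le> C * real (word_dist H SH p (p \<otimes>\<^bsub>H\<^esub> t))"
      using fg p tH C by (simp add: divide_le_eq mult.commute)
    also have "word_dist H SH p (p \<otimes>\<^bsub>H\<^esub> t) = word_length H SH t" using p tH by (simp add: WH.G.wd_mult)
    also have "C * real (word_length H SH t) \<le> C * 1"
      using WH.G.wl_alph[OF t SH(1)] C by (intro mult_left_mono) auto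
    finally show "real (word_dist G SG (g p) (g (p \<otimes>\<^bsub>H\<^esub> t))) \<le> C" by simp
  qed
  show ?thesis
  proof (rule bilip_from_gen[where \<Phi> = "lift N H f g" and \<Psi> = "lift N G g f" and K = C])
    show "group (wreath N G)" "group (wreath N H)" by (rule WG.wr_group, rule WH.wr_group)
    show "wreath_gens N SN G SG \<subseteq> carrier (wreath N G)" by (rule WG.gens_carrier[OF SN SG])
    show "generate (wreath N G) (wreath_gens N SN G SG) = carrier (wreath N G)" by (rule WG.wr_generate[OF SN SG])
    show "wreath_gens N SN H SH \<subseteq> carrier (wreath N H)" by (rule WH.gens_carrier[OF SN SH])
    show "generate (wreath N H) (wreath_gens N SN H SH) = carrier (wreath N H)" by (rule WH.wr_generate[OF SN SH])
    show "lift N H f g \<in> carrier (wreath N G) \<rightarrow> carrier (wreath N H)"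
      using lift_mem[OF grps SN SG SH f g gf fg] by auto
    show "lift N G g f \<in> carrier (wreath N H) \<rightarrow> carrier (wreath N G)"
      using lift_mem[OF grps(1,3,2) SN SH SG g f fg gf] by auto
    show "\<And>x. x \<in> carrier (wreath N G) \<Longrightarrow> lift N G g f (lift N H f g x) = x"
      using lift_inv[OF grps SN SG SH f g gf fg] by auto
    show "\<And>x. x \<in> carrier (wreath N H) \<Longrightarrow> lift N H f g (lift N G g f x) = x"
      using lift_inv[OF grps(1,3,2) SN SH SG g f fg gf] by auto
    show "1 \<le> C" by fact
    show "\<forall>x\<in>carrier (wreath N G). \<forall>s\<in>wreath_gens N SN G SG \<union> (\<lambda>s. inv\<^bsub>wreath N G\<^esub> s) ` wreath_gens N SN G SG.
       real (word_dist (wreath N H) (wreath_gens N SN H SH) (lift N H f g x) (lift N H f g (x \<otimes>\<^bsub>wreath N G\<^esub> s))) \<le> C"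
      by (rule lift_step[OF grps SN SG SH f g gf fg C bf])
    show "\<forall>x\<in>carrier (wreath N H). \<forall>s\<in>wreath_gens N SN H SH \<union> (\<lambda>s. inv\<^bsub>wreath N H\<^esub> s) ` wreath_gens N SN H SH.
       real (word_dist (wreath N G) (wreath_gens N SN G SG) (lift N G g f x) (lift N G g f (x \<otimes>\<^bsub>wreath N H\<^esub> s))) \<le> C"
      by (rule lift_step[OF grps(1,3,2) SN SH SG g f fg gf C bg])
  qed
qed


end
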